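(* Let $C \subseteq \mathbb{F}_q^n$ be a linear code of dimension $k$ with minimum distance $d$, and let $(d_1,\dots,d_k)$ be its weight hierarchy. Assume that there is an integer $i$ with $1 \leqslant i < k$ such that \[ d_k = \frac{q^k-1}{q^{k-i}(q^i-1)}\, d_i. \] Then $C$ is a constant weight code, and the common weight of its non-zero codewords is $d_k\dfrac{q^{k-1}(q-1)}{q^k-1}$.
   Context: For a subcode $D \subseteq C$ (a linear subspace), $\mathrm{Supp}(D)=\{x\in\{1,\dots,n\} : \exists d\in D,\ d_x\neq 0\}$ and $w(D)=\#\mathrm{Supp}(D)$; the weight of a codeword $c$ is the weight of the subcode it spans. For $1\leqslant r\leqslant k$, the $r$-th generalized Hamming weight is $d_r=\min\{w(D) : D \subseteq C \text{ a subcode of dimension } r\}$; the weight hierarchy is $(d_1,\dots,d_k)$, and $d_1=d$. A constant weight code is a code all of whose non-zero codewords have the same weight. *)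

theory Defs
  imports Complex_Main "HOL-Library.Function_Algebras"
begin

text \<open>Ambient space: F_q^n is modelled as functions from a finite coordinate type 'n
  (with n = CARD('n)) to a finite field 'a (with q = CARD('a)).
  Scalar multiplication is pointwise.\<close>

definition cscale :: "'a::field \<Rightarrow> ('n \<Rightarrow> 'a) \<Rightarrow> ('n \<Rightarrow> 'a)" where
  "cscale c v = (\<lambda>x. c * v x)"

lemma vector_space_cscale: "vector_space (cscale :: 'a::field \<Rightarrow> ('n \<Rightarrow> 'a) \<Rightarrow> _)"
  by unfold_locales (auto simp: cscale_def fun_eq_iff algebra_simps)

abbreviation is_subspace :: "('n \<Rightarrow> 'a::field) set \<Rightarrow> bool" where
  "is_subspace S \<equiv> module.subspace cscale S"

abbreviation sdim :: "('n \<Rightarrow> 'a::field) set \<Rightarrow> nat" where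
  "sdim S \<equiv> vector_space.dim cscale S"

abbreviation sspan :: "('n \<Rightarrow> 'a::field) set \<Rightarrow> ('n \<Rightarrow> 'a) set" where
  "sspan S \<equiv> module.span cscale S"

definition Supp :: "('n \<Rightarrow> 'a::zero) set \<Rightarrow> 'n set" where
  "Supp D = {x. \<exists>d\<in>D. d x \<noteq> 0}"

definition wt :: "('n \<Rightarrow> 'a::zero) set \<Rightarrow> nat" where
  "wt D = card (Supp D)"

definition cw_weight :: "('n \<Rightarrow> 'a::field) \<Rightarrow> nat" where
  "cw_weight c = wt (sspan {c})"

definition ghw :: "('n \<Rightarrow> 'a::field) set \<Rightarrow> nat \<Rightarrow> nat" where
  "ghw C r = Min {wt D | D. D \<subseteq> C \<and> is_subspace D \<and> sdim D = r}"

definition constant_weight_code :: "('n \<Rightarrow> 'a::field) set \<Rightarrow> bool" where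
  "constant_weight_code C \<longleftrightarrow> (\<exists>w. \<forall>c\<in>C. c \<noteq> 0 \<longrightarrow> cw_weight c = w)"

end

theory Submission imports Defs begin

interpretation cs: vector_space "cscale :: 'a::field \<Rightarrow> ('n \<Rightarrow> 'a) \<Rightarrow> _"
  by (rule vector_space_cscale)

definition cB :: "('n::finite \<Rightarrow> 'a::{finite,field}) set" where
  "cB = (SOME B. cs.independent B \<and> cs.span B = UNIV)"

lemma cB_props: "cs.independent (cB :: ('n::finite \<Rightarrow> 'a::{finite,field}) set) \<and> cs.span (cB :: ('n::finite \<Rightarrow> 'a::{finite,field}) set) = UNIV"
proof -
  obtain B :: "('n \<Rightarrow> 'a) set" where B: "cs.independent B" "UNIV \<subseteq> cs.span B"
    using cs.basis_exists[of UNIV] by metis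
  hence "\<exists>B::('n \<Rightarrow> 'a) set. cs.independent B \<and> cs.span B = UNIV" by blast
  note X = someI_ex[OF this]
  show ?thesis unfolding cB_def by (rule X)
qed

interpretation fd: finite_dimensional_vector_space "cscale :: 'a::{finite,field} \<Rightarrow> ('n::finite \<Rightarrow> 'a) \<Rightarrow> _" cB
  by unfold_locales (auto simp: cB_props)

lemma card_span_insert:
  fixes S :: "('n::finite \<Rightarrow> 'a::{finite,field}) set"
  assumes "v \<notin> cs.span S"
  shows "card (cs.span (insert v S)) = card (UNIV::'a set) * card (cs.span S)"
proof -
  have eq: "cs.span (insert v S) = (\<lambda>(a,f). cscale a v + f) ` (UNIV \<times> cs.span S)"
  proof
    show "cs.span (insert v S) \<subseteq> (\<lambda>(a,f). cscale a v + f) ` (UNIV \<times> cs.span S)"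
    proof
      fix x assume "x \<in> cs.span (insert v S)"
      then obtain a where "x - cscale a v \<in> cs.span S" unfolding cs.span_insert by blast
      thus "x \<in> (\<lambda>(a,f). cscale a v + f) ` (UNIV \<times> cs.span S)"
        by (intro image_eqI[of _ _ "(a, x - cscale a v)"]) auto
    qed
  next
    show "(\<lambda>(a,f). cscale a v + f) ` (UNIV \<times> cs.span S) \<subseteq> cs.span (insert v S)"
    proof clarify
      fix a f assume f: "f \<in> cs.span S"
      have "cscale a v \<in> cs.span (insert v S)" by (intro cs.span_scale cs.span_base) simp
      moreover have "f \<in> cs.span (insert v S)" using f cs.span_mono[of S "insert v S"] by blast
      ultimately show "cscale a v + f \<in> cs.span (insert v S)" by (rule cs.span_add)
    qed
  qed
  have inj: "inj_on (\<lambda>(a,f). cscale a v + f) (UNIV \<times> cs.span S)"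
  proof (rule inj_onI, clarsimp)
    fix a f b g assume f: "f \<in> cs.span S" and g: "g \<in> cs.span S"
      and e: "cscale a v + f = cscale b v + g"
    show "a = b \<and> f = g"
    proof (cases "a = b")
      case True thus ?thesis using e by simp
    next
      case False
      have "cscale (a - b) v = g - f" using e
        by (simp add: cscale_def fun_eq_iff algebra_simps)
      hence "cscale (inverse (a - b)) (cscale (a - b) v) \<in> cs.span S"
        using f g by (simp add: cs.span_diff cs.span_scale)
      moreover have "cscale (inverse (a - b)) (cscale (a - b) v) = v" using False by (simp add: cscale_def fun_eq_iff mult.assoc[symmetric])
      ultimately have "v \<in> cs.span S" by simp
      thus ?thesis using assms by simp
    qed
  qed
  show ?thesis unfolding eq card_image[OF inj] card_cartesian_product by simp
qed

lemma card_span_indep: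
  fixes B :: "('n::finite \<Rightarrow> 'a::{finite,field}) set"
  shows "cs.independent B \<Longrightarrow> card (cs.span B) = card (UNIV::'a set) ^ card B"
proof (induction B rule: finite_induct[OF finite])
  case 1 thus ?case by simp
next
  case (2 x F)
  have "cs.independent F \<and> x \<notin> cs.span F" using cs.independent_insert[of x F] 2 by simp
  thus ?case using 2 card_span_insert[of x F] by simp
qed

lemma card_subspace:
  fixes S :: "('n::finite \<Rightarrow> 'a::{finite,field}) set"
  assumes "cs.subspace S"
  shows "card S = card (UNIV::'a set) ^ cs.dim S"
proof -
  obtain B where B: "B \<subseteq> S" "cs.independent B" "S \<subseteq> cs.span B" "card B = cs.dim S"
    using cs.basis_exists by blast
  have "cs.span B = S" using B assms by (simp add: cs.span_subspace)
  thus ?thesis using card_span_indep[OF B(2)] B(4) by simp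
qed


definition Zs :: "('n \<Rightarrow> 'a::zero) set \<Rightarrow> ('n \<Rightarrow> 'a) set \<Rightarrow> 'n set" where
  "Zs C G = {x \<in> Supp C. \<forall>g\<in>G. g x = 0}"

lemma vanish_span:
  fixes S :: "('n \<Rightarrow> 'a::field) set"
  shows "(\<forall>g\<in>cs.span S. g x = 0) \<longleftrightarrow> (\<forall>g\<in>S. g x = 0)"
proof
  assume "\<forall>g\<in>S. g x = 0"
  hence "S \<subseteq> {g. g x = 0}" by auto
  moreover have "cs.subspace {g :: 'n \<Rightarrow> 'a. g x = 0}"
    by (auto simp: cs.subspace_def cscale_def)
  ultimately have "cs.span S \<subseteq> {g. g x = 0}" by (rule cs.span_minimal)
  thus "\<forall>g\<in>cs.span S. g x = 0" by auto
qed (auto intro: cs.span_base)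

lemma card_pos_field: "card (UNIV :: 'a::{finite,field} set) \<ge> 2"
proof -
  have "{0, 1::'a} \<subseteq> UNIV" by simp
  hence "card {0, 1::'a} \<le> card (UNIV :: 'a set)" by (rule card_mono[OF finite])
  thus ?thesis by simp
qed

lemma ker_card:
  fixes C :: "('n::finite \<Rightarrow> 'a::{finite,field}) set"
  assumes C: "cs.subspace C" and x: "x \<in> Supp C"
  shows "card C = card (UNIV :: 'a set) * card {v\<in>C. v x = 0}"
proof -
  obtain c0 where c0: "c0 \<in> C" "c0 x \<noteq> 0" using x unfolding Supp_def by auto
  let ?K = "{v\<in>C. v x = 0}"
  let ?f = "\<lambda>(a,h). cscale a c0 + h"
  have eq: "C = ?f ` (UNIV \<times> ?K)"
  proof
    show "C \<subseteq> ?f ` (UNIV \<times> ?K)"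
    proof
      fix v assume v: "v \<in> C"
      define a where "a = v x / c0 x"
      have "v - cscale a c0 \<in> C" using v c0 C by (simp add: cs.subspace_diff cs.subspace_scale)
      moreover have "(v - cscale a c0) x = 0" using c0 by (simp add: a_def cscale_def)
      ultimately show "v \<in> ?f ` (UNIV \<times> ?K)"
        by (intro image_eqI[of _ _ "(a, v - cscale a c0)"]) auto
    qed
  next
    show "?f ` (UNIV \<times> ?K) \<subseteq> C"
      using C c0 by (auto intro!: cs.subspace_add cs.subspace_scale)
  qed
  have inj: "inj_on ?f (UNIV \<times> ?K)"
  proof (rule inj_onI, clarsimp)
    fix a h b g assume h: "h \<in> C" "h x = 0" and g: "g \<in> C" "g x = 0"
      and e: "cscale a c0 + h = cscale b c0 + g"
    have "a * c0 x = b * c0 x" using fun_cong[OF e, of x] h g by (simp add: cscale_def)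
    hence ab: "a = b" using c0 by simp
    thus "a = b \<and> h = g" using e by simp
  qed
  have "card C = card (?f ` (UNIV \<times> ?K))" by (rule arg_cong[where f=card, OF eq])
  also have "\<dots> = card ((UNIV :: 'a set) \<times> ?K)" using inj by (simp add: card_image)
  finally show ?thesis by (simp add: card_cartesian_product)
qed

lemma card_filter_sum: "finite A \<Longrightarrow> card {x\<in>A. P x} = (\<Sum>x\<in>A. if P x then 1 else 0 :: nat)"
  by (simp add: sum.If_cases Int_def)

lemma key:
  fixes C F :: "('n::finite \<Rightarrow> 'a::{finite,field}) set"
  assumes C: "cs.subspace C" and F: "cs.subspace F" and FC: "F \<subseteq> C"
  shows "(\<Sum>v\<in>C - F. card (Zs C (cs.span (insert v F))))
          = card (Zs C F) * (card C div card (UNIV :: 'a set) - card F)"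
proof -
  let ?Z = "Zs C F"
  have zs: "Zs C (cs.span (insert v F)) = {x\<in>?Z. v x = 0}" for v
    unfolding Zs_def vanish_span by auto
  have "(\<Sum>v\<in>C - F. card (Zs C (cs.span (insert v F))))
      = (\<Sum>v\<in>C - F. \<Sum>x\<in>?Z. if v x = 0 then 1 else 0)"
    by (simp add: zs card_filter_sum)
  also have "\<dots> = (\<Sum>x\<in>?Z. \<Sum>v\<in>C - F. if v x = 0 then 1 else 0)"
    by (rule sum.swap)
  also have "\<dots> = (\<Sum>x\<in>?Z. card C div card (UNIV :: 'a set) - card F)"
  proof (rule sum.cong[OF refl])
    fix x assume x: "x \<in> ?Z"
    hence xs: "x \<in> Supp C" and Fx: "\<forall>g\<in>F. g x = 0" unfolding Zs_def by auto
    have "(\<Sum>v\<in>C - F. if v x = 0 then 1 else 0) = card {v\<in>C - F. v x = 0}"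
      by (rule card_filter_sum[symmetric], rule finite)
    also have "{v\<in>C - F. v x = 0} = {v\<in>C. v x = 0} - F" by auto
    also have "card \<dots> = card {v\<in>C. v x = 0} - card F"
      using FC Fx by (intro card_Diff_subset) auto
    also have "card {v\<in>C. v x = 0} = card C div card (UNIV :: 'a set)"
      using ker_card[OF C xs] card_pos_field[where 'a='a] by simp
    finally show "(\<Sum>v\<in>C - F. if v x = 0 then 1 else 0) = card C div card (UNIV :: 'a set) - card F" .
  qed
  also have "\<dots> = card ?Z * (card C div card (UNIV :: 'a set) - card F)" by simp
  finally show ?thesis .
qed


lemma exists_sub:
  fixes C :: "('n::finite \<Rightarrow> 'a::{finite,field}) set"
  assumes C: "cs.subspace C"
  shows "j \<le> cs.dim C \<Longrightarrow> \<exists>D. D \<subseteq> C \<and> cs.subspace D \<and> cs.dim D = j"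
proof (induction j)
  case 0
  have "cs.dim ({0} :: ('n \<Rightarrow> 'a) set) = 0"
    using cs.dim_span[of "{} :: ('n \<Rightarrow> 'a) set"] by simp
  thus ?case using C cs.subspace_0[OF C] by (intro exI[of _ "{0}"]) auto
next
  case (Suc j)
  then obtain D where D: "D \<subseteq> C" "cs.subspace D" "cs.dim D = j" by auto
  have "D \<noteq> C" using D Suc.prems by auto
  then obtain v where v: "v \<in> C" "v \<notin> D" using D by auto
  have vs: "v \<notin> cs.span D" using v(2) cs.span_eq_iff[of D] D(2) by metis
  have "cs.span (insert v D) \<subseteq> C" using D v C by (intro cs.span_minimal) auto
  moreover have "cs.dim (cs.span (insert v D)) = Suc j"
    using fd.dim_insert[of v D] vs D by simp
  ultimately show ?case by (intro exI[of _ "cs.span (insert v D)"]) auto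
qed

lemma Supp_mono: "D \<subseteq> C \<Longrightarrow> Supp D \<subseteq> Supp C"
  unfolding Supp_def by auto

lemma wt_Zs:
  fixes C G :: "('n::finite \<Rightarrow> 'a::zero) set"
  assumes "G \<subseteq> C"
  shows "wt G + card (Zs C G) = wt C"
proof -
  have "Zs C G = Supp C - Supp G" unfolding Zs_def Supp_def by auto
  moreover have "Supp G \<subseteq> Supp C" using assms by (rule Supp_mono)
  ultimately show ?thesis unfolding wt_def
    by (simp add: card_Diff_subset card_mono le_add_diff_inverse)
qed

lemma wt_mono: "D \<subseteq> (C :: ('n::finite \<Rightarrow> 'a::zero) set) \<Longrightarrow> wt D \<le> wt C"
  unfolding wt_def by (intro card_mono[OF finite] Supp_mono)

lemma ghw_finite:
  "finite {wt D | D. D \<subseteq> (C :: ('n::finite \<Rightarrow> 'a::{finite,field}) set) \<and> is_subspace D \<and> sdim D = r}"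
proof -
  have "{wt D | D. D \<subseteq> C \<and> is_subspace D \<and> sdim D = r} \<subseteq> wt ` (UNIV :: ('n \<Rightarrow> 'a) set set)" by auto
  thus ?thesis by (rule finite_subset) simp
qed

lemma ghw_le:
  fixes C D :: "('n::finite \<Rightarrow> 'a::{finite,field}) set"
  assumes "D \<subseteq> C" "cs.subspace D" "cs.dim D = r"
  shows "ghw C r \<le> wt D"
  unfolding ghw_def using assms by (intro Min_le[OF ghw_finite]) auto

lemma ghw_ex:
  fixes C :: "('n::finite \<Rightarrow> 'a::{finite,field}) set"
  assumes C: "cs.subspace C" and r: "r \<le> cs.dim C"
  obtains D where "D \<subseteq> C" "cs.subspace D" "cs.dim D = r" "wt D = ghw C r"
proof -
  have ne: "{wt D | D. D \<subseteq> C \<and> is_subspace D \<and> sdim D = r} \<noteq> {}"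
    using exists_sub[OF C r] by auto
  have "ghw C r \<in> {wt D | D. D \<subseteq> C \<and> is_subspace D \<and> sdim D = r}"
    unfolding ghw_def by (rule Min_in[OF ghw_finite ne])
  thus ?thesis using that by auto
qed

lemma ghw_le_wt:
  fixes C :: "('n::finite \<Rightarrow> 'a::{finite,field}) set"
  assumes C: "cs.subspace C" and r: "r \<le> cs.dim C"
  shows "ghw C r \<le> wt C"
  using ghw_ex[OF C r] wt_mono by metis

lemma ghw_top:
  fixes C :: "('n::finite \<Rightarrow> 'a::{finite,field}) set"
  assumes C: "cs.subspace C"
  shows "ghw C (cs.dim C) = wt C"
proof -
  obtain D where D: "D \<subseteq> C" "cs.subspace D" "cs.dim D = cs.dim C" "wt D = ghw C (cs.dim C)"
    using ghw_ex[OF C order_refl] by blast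
  have "D = C" using fd.subspace_dim_equal[OF D(2) C D(1)] D(3) by simp
  thus ?thesis using D by simp
qed

lemma ghw_zero:
  fixes C :: "('n::finite \<Rightarrow> 'a::{finite,field}) set"
  assumes C: "cs.subspace C"
  shows "ghw C 0 = 0"
proof -
  have "cs.dim ({0} :: ('n \<Rightarrow> 'a) set) = 0"
    using cs.dim_span[of "{} :: ('n \<Rightarrow> 'a) set"] by simp
  hence "ghw C 0 \<le> wt ({0} :: ('n \<Rightarrow> 'a) set)" using cs.subspace_0[OF C] by (intro ghw_le) auto
  moreover have "wt ({0} :: ('n \<Rightarrow> 'a) set) = 0" by (simp add: wt_def Supp_def)
  ultimately show ?thesis by simp
qed

lemma step_nat:
  fixes C :: "('n::finite \<Rightarrow> 'a::{finite,field}) set"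
  assumes C: "cs.subspace C" and k: "cs.dim C = k" and j: "Suc j \<le> k"
  shows "(wt C - ghw C j) * (card (UNIV::'a set) ^ (k - 1) - card (UNIV::'a set) ^ j)
         \<le> (card (UNIV::'a set) ^ k - card (UNIV::'a set) ^ j) * (wt C - ghw C (Suc j))"
proof -
  let ?q = "card (UNIV::'a set)"
  obtain F where F: "F \<subseteq> C" "cs.subspace F" "cs.dim F = j" "wt F = ghw C j"
    using ghw_ex[OF C, of j] j k by auto
  have cZ: "card (Zs C F) = wt C - ghw C j" using wt_Zs[OF F(1)] F(4) by simp
  have cC: "card C = ?q ^ k" using card_subspace[OF C] k by simp
  have cF: "card F = ?q ^ j" using card_subspace[OF F(2)] F(3) by simp
  have qpos: "?q > 0" using card_pos_field[where 'a='a] by simp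
  have div: "?q ^ k div ?q = ?q ^ (k - 1)"
    using j qpos by (cases k) auto
  have "card (Zs C F) * (?q ^ (k - 1) - ?q ^ j) = (\<Sum>v\<in>C - F. card (Zs C (cs.span (insert v F))))"
    using key[OF C F(2) F(1)] cC cF div by simp
  also have "\<dots> \<le> card (C - F) * (wt C - ghw C (Suc j))"
  proof -
   have "card (Zs C (cs.span (insert v F))) \<le> wt C - ghw C (Suc j)" if v: "v \<in> C - F" for v
   proof -
    let ?D = "cs.span (insert v F)"
    have DC: "?D \<subseteq> C" using F v C by (intro cs.span_minimal) auto
    have vs: "v \<notin> cs.span F" using v cs.span_eq_iff[of F] F(2) by (metis DiffD2)
    have "cs.dim ?D = Suc j" using fd.dim_insert[of v F] vs F by simp
    hence "ghw C (Suc j) \<le> wt ?D" using DC by (intro ghw_le) auto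
    thus "card (Zs C ?D) \<le> wt C - ghw C (Suc j)" using wt_Zs[OF DC] by linarith
   qed
   thus ?thesis using sum_bounded_above[of "C - F" "\<lambda>v. card (Zs C (cs.span (insert v F)))" "wt C - ghw C (Suc j)"] by simp
  qed
  also have "card (C - F) = ?q ^ k - ?q ^ j" using cC cF F(1) by (simp add: card_Diff_subset)
  finally show ?thesis using cZ by simp
qed


lemma real_pow_diff:
  fixes q :: nat
  assumes "q \<ge> 1" "a \<le> b"
  shows "real (q ^ b - q ^ a) = real q ^ a * (real q ^ (b - a) - 1)"
proof -
  have "q ^ a \<le> q ^ b" using assms by (intro power_increasing) auto
  hence "real (q ^ b - q ^ a) = real q ^ b - real q ^ a" by (simp add: of_nat_diff)
  also have "real q ^ b = real q ^ a * real q ^ (b - a)"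
    using assms(2) by (simp add: power_add[symmetric])
  finally show ?thesis by (simp add: algebra_simps)
qed

lemma step_real:
  fixes C :: "('n::finite \<Rightarrow> 'a::{finite,field}) set"
  assumes C: "cs.subspace C" and k: "cs.dim C = k" and j: "Suc j \<le> k"
  shows "(real (wt C) - real (ghw C j)) * (real (card (UNIV::'a set)) ^ (k - Suc j) - 1)
         \<le> (real (card (UNIV::'a set)) ^ (k - j) - 1) * (real (wt C) - real (ghw C (Suc j)))"
proof -
  let ?q = "card (UNIV::'a set)"
  let ?Q = "real ?q"
  have q1: "?q \<ge> 1" using card_pos_field[where 'a='a] by simp
  have Qp: "?Q ^ j > 0" using q1 by simp
  have X: "real (wt C - ghw C j) * real (?q ^ (k - 1) - ?q ^ j)
         \<le> real (?q ^ k - ?q ^ j) * real (wt C - ghw C (Suc j))"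
    using step_nat[OF C k j] by (metis of_nat_le_iff of_nat_mult)
  have e1: "real (wt C - ghw C j) = real (wt C) - real (ghw C j)"
    using ghw_le_wt[OF C, of j] j k by (simp add: of_nat_diff)
  have e2: "real (wt C - ghw C (Suc j)) = real (wt C) - real (ghw C (Suc j))"
    using ghw_le_wt[OF C, of "Suc j"] j k by (simp add: of_nat_diff)
  have kk: "k - Suc j = (k - 1) - j" by simp
  have e3: "real (?q ^ (k - 1) - ?q ^ j) = ?Q ^ j * (?Q ^ (k - Suc j) - 1)"
    unfolding kk using j by (intro real_pow_diff[OF q1]) simp
  have e4: "real (?q ^ k - ?q ^ j) = ?Q ^ j * (?Q ^ (k - j) - 1)"
    using j by (intro real_pow_diff[OF q1]) simp
  define m1 where "m1 = real (wt C) - real (ghw C j)"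
  define m2 where "m2 = real (wt C) - real (ghw C (Suc j))"
  define A where "A = ?Q ^ (k - j) - 1"
  define B where "B = ?Q ^ (k - Suc j) - 1"
  define P where "P = ?Q ^ j"
  have "m1 * (P * B) \<le> (P * A) * m2"
    using X unfolding e1 e2 e3 e4 m1_def m2_def A_def B_def P_def .
  hence "P * (m1 * B) \<le> P * (A * m2)" by (simp add: mult_ac)
  hence "m1 * B \<le> A * m2" using Qp unfolding P_def by (simp only: mult_le_cancel_left_pos)
  thus ?thesis unfolding m1_def m2_def A_def B_def .
qed

lemma chain:
  fixes C :: "('n::finite \<Rightarrow> 'a::{finite,field}) set"
  assumes C: "cs.subspace C" and k: "cs.dim C = k" and aj: "a \<le> j" and jk: "j < k"
  shows "(real (wt C) - real (ghw C a)) * (real (card (UNIV::'a set)) ^ (k - j) - 1)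
         \<le> (real (card (UNIV::'a set)) ^ (k - a) - 1) * (real (wt C) - real (ghw C j))"
  using aj jk
proof (induction j rule: dec_induct)
  case base thus ?case by (simp add: mult.commute)
next
  case (step n)
  let ?Q = "real (card (UNIV::'a set))"
  let ?m = "\<lambda>j. real (wt C) - real (ghw C j)"
  have q1: "?Q \<ge> 2" using card_pos_field[where 'a='a] by simp
  have "1 < ?Q ^ (k - n)" using q1 step.prems by (intro one_less_power) auto
  hence A: "?Q ^ (k - n) - 1 > 0" by simp
  have "1 \<le> ?Q ^ (k - Suc n)" using q1 by (intro one_le_power) auto
  hence B: "?Q ^ (k - Suc n) - 1 \<ge> 0" by simp
  have "1 \<le> ?Q ^ (k - a)" using q1 by (intro one_le_power) auto
  hence Ka: "?Q ^ (k - a) - 1 \<ge> 0" by simp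
  have IH: "?m a * (?Q ^ (k - n) - 1) \<le> (?Q ^ (k - a) - 1) * ?m n"
    using step.IH step.prems by simp
  have S: "?m n * (?Q ^ (k - Suc n) - 1) \<le> (?Q ^ (k - n) - 1) * ?m (Suc n)"
    using step_real[OF C k] step.prems by simp
  have "(?Q ^ (k - n) - 1) * (?m a * (?Q ^ (k - Suc n) - 1))
        = (?m a * (?Q ^ (k - n) - 1)) * (?Q ^ (k - Suc n) - 1)" by (simp add: mult_ac)
  also have "\<dots> \<le> ((?Q ^ (k - a) - 1) * ?m n) * (?Q ^ (k - Suc n) - 1)"
    by (rule mult_right_mono[OF IH B])
  also have "\<dots> = (?Q ^ (k - a) - 1) * (?m n * (?Q ^ (k - Suc n) - 1))" by (simp add: mult_ac)
  also have "\<dots> \<le> (?Q ^ (k - a) - 1) * ((?Q ^ (k - n) - 1) * ?m (Suc n))"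
    by (rule mult_left_mono[OF S Ka])
  also have "\<dots> = (?Q ^ (k - n) - 1) * ((?Q ^ (k - a) - 1) * ?m (Suc n))" by (simp add: mult_ac)
  finally show ?case using A by (simp only: mult_le_cancel_left_pos)
qed


theorem proposition1:
  fixes C :: "('n::finite \<Rightarrow> 'a::{finite,field}) set"
    and k i :: nat
  assumes "is_subspace C"
    and "sdim C = k"
    and "1 \<le> i" and "i < k"
    and "real (ghw C k) =
           (real (card (UNIV :: 'a set)) ^ k - 1) / (real (card (UNIV :: 'a set)) ^ (k - i) * (real (card (UNIV :: 'a set)) ^ i - 1))
             * real (ghw C i)"
  shows "constant_weight_code C \<and>
         (\<forall>c\<in>C. c \<noteq> 0 \<longrightarrow>
            real (cw_weight c) =
              real (ghw C k) * (real (card (UNIV :: 'a set)) ^ (k - 1) * (real (card (UNIV :: 'a set)) - 1))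
                / (real (card (UNIV :: 'a set)) ^ k - 1))"
proof -
  note C = assms(1) and kd = assms(2) and i1 = assms(3) and ik = assms(4) and hyp = assms(5)
  let ?q = "card (UNIV :: 'a set)"
  let ?Q = "real ?q"
  define N where "N = wt C"
  define g1 where "g1 = ghw C 1"
  define gi where "gi = ghw C i"
  have q2: "?Q \<ge> 2" using card_pos_field[where 'a='a] by simp
  have q1n: "?q \<ge> 1" using card_pos_field[where 'a='a] by simp
  have top: "ghw C k = N" using ghw_top[OF C] kd N_def by simp
  have g0: "ghw C 0 = 0" by (rule ghw_zero[OF C])
  have "1 < ?Q ^ (k - 1)" using q2 ik i1 by (intro one_less_power) auto
  hence Xp: "?Q ^ (k - 1) - 1 > 0" by simp
  have "1 < ?Q ^ (k - i)" using q2 ik by (intro one_less_power) auto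
  hence Yp: "?Q ^ (k - i) - 1 > 0" by simp
  have "1 < ?Q ^ k" using q2 ik by (intro one_less_power) auto
  hence Pp: "?Q ^ k - 1 > 0" by simp
  have "1 < ?Q ^ i" using q2 i1 by (intro one_less_power) auto
  hence Wp: "?Q ^ i - 1 > 0" by simp
  have c01: "real N * (?Q ^ (k - 1) - 1) \<le> (?Q ^ k - 1) * (real N - real g1)"
    using chain[OF C kd, of 0 1] ik i1 g0 unfolding N_def g1_def by simp
  have c1i: "(real N - real g1) * (?Q ^ (k - i) - 1) \<le> (?Q ^ (k - 1) - 1) * (real N - real gi)"
    using chain[OF C kd, of 1 i] ik i1 unfolding N_def g1_def gi_def by simp
  have Qk: "?Q ^ k = ?Q ^ (k - i) * ?Q ^ i" using ik by (simp add: power_add[symmetric])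
  have h2: "real N * (?Q ^ (k - i) * (?Q ^ i - 1)) = (?Q ^ k - 1) * real gi"
    using hyp top Yp Wp unfolding gi_def
    by (simp add: field_simps)
  have hE: "real N * (?Q ^ (k - i) - 1) = (?Q ^ k - 1) * (real N - real gi)"
  proof -
    have "(?Q ^ k - 1) * (real N - real gi) = (?Q ^ k - 1) * real N - real N * (?Q ^ (k - i) * (?Q ^ i - 1))"
      using h2 by (simp add: algebra_simps)
    also have "\<dots> = real N * (?Q ^ (k - i) - 1)" unfolding Qk by (simp add: algebra_simps)
    finally show ?thesis by simp
  qed
  have E: "real N * (?Q ^ (k - 1) - 1) = (?Q ^ k - 1) * (real N - real g1)"
  proof (rule ccontr)
    assume "\<not> ?thesis"
    hence lt: "real N * (?Q ^ (k - 1) - 1) < (?Q ^ k - 1) * (real N - real g1)" using c01 by simp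
    have "(real N * (?Q ^ (k - 1) - 1)) * (?Q ^ (k - i) - 1) < ((?Q ^ k - 1) * (real N - real g1)) * (?Q ^ (k - i) - 1)"
      by (rule mult_strict_right_mono[OF lt Yp])
    also have "\<dots> = (?Q ^ k - 1) * ((real N - real g1) * (?Q ^ (k - i) - 1))" by (simp add: mult_ac)
    also have "\<dots> \<le> (?Q ^ k - 1) * ((?Q ^ (k - 1) - 1) * (real N - real gi))"
      by (rule mult_left_mono[OF c1i]) (use Pp in simp)
    also have "\<dots> = (?Q ^ (k - 1) - 1) * ((?Q ^ k - 1) * (real N - real gi))" by (simp add: mult_ac)
    also have "\<dots> = (?Q ^ (k - 1) - 1) * (real N * (?Q ^ (k - i) - 1))" by (simp only: hE)
    finally show False by (simp add: mult_ac)
  qed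
  have g1N: "g1 \<le> N" using ghw_le_wt[OF C, of 1] kd ik unfolding g1_def N_def by simp
  have EN: "N * (?q ^ (k - 1) - 1) = (?q ^ k - 1) * (N - g1)"
  proof -
    have a: "1 \<le> ?q ^ (k - 1)" "1 \<le> ?q ^ k" using q1n by (auto intro: one_le_power)
    have "real (N * (?q ^ (k - 1) - 1)) = real ((?q ^ k - 1) * (N - g1))"
      using E a g1N by (simp add: of_nat_diff)
    thus ?thesis by (simp only: of_nat_eq_iff)
  qed
  \<comment> \<open>the averaging over 1-dimensional subcodes\<close>
  let ?S = "C - {0}"
  let ?t = "\<lambda>v. card (Zs C (cs.span (insert v {0})))"
  have z0: "cs.subspace ({0} :: ('n \<Rightarrow> 'a) set)" by simp
  have z0C: "{0} \<subseteq> C" using cs.subspace_0[OF C] by simp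
  have cC: "card C = ?q ^ k" using card_subspace[OF C] kd by simp
  have div: "?q ^ k div ?q = ?q ^ (k - 1)" using ik q1n by (cases k) auto
  have wt0: "wt ({0} :: ('n \<Rightarrow> 'a) set) = 0" by (simp add: wt_def Supp_def)
  have cZ0: "card (Zs C {0}) = N" using wt_Zs[OF z0C] wt0 N_def by simp
  have sumS: "(\<Sum>v\<in>?S. ?t v) = N * (?q ^ (k - 1) - 1)"
    using key[OF C z0 z0C] cC div cZ0 by simp
  have bnd: "?t v \<le> N - g1 \<and> wt (cs.span (insert v {0})) + ?t v = N" if v: "v \<in> ?S" for v
  proof -
    let ?D = "cs.span (insert v {0})"
    have DC: "?D \<subseteq> C" using v C z0C by (intro cs.span_minimal) auto
    have vs: "v \<notin> cs.span {0}" using v by simp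
    have "cs.dim ?D = 1" using fd.dim_insert[of v "{0}"] vs
      using cs.dim_span[of "{} :: ('n \<Rightarrow> 'a) set"] by simp
    hence "g1 \<le> wt ?D" unfolding g1_def using DC by (intro ghw_le) auto
    thus ?thesis using wt_Zs[OF DC] N_def by linarith
  qed
  have cS: "card ?S = ?q ^ k - 1" using cC cs.subspace_0[OF C] by (simp add: card_Diff_singleton)
  have allt: "?t v = N - g1" if v: "v \<in> ?S" for v
  proof (rule ccontr)
    assume "?t v \<noteq> N - g1"
    hence "?t v < N - g1" using bnd[OF v] by simp
    hence "(\<Sum>v\<in>?S. ?t v) < (\<Sum>v\<in>?S. N - g1)"
      using bnd v by (intro sum_strict_mono_ex1) auto
    also have "\<dots> = (?q ^ k - 1) * (N - g1)" using cS by simp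
    finally show False using sumS EN by simp
  qed
  have wv: "cw_weight v = g1" if v: "v \<in> C" "v \<noteq> 0" for v
  proof -
    have "insert v {0} = insert 0 {v}" by auto
    hence "cs.span {v} = cs.span (insert v {0})" by simp
    hence "cw_weight v = wt (cs.span (insert v {0}))" unfolding cw_weight_def by simp
    thus ?thesis using bnd[of v] allt[of v] v g1N by simp
  qed
  have val: "real g1 = real (ghw C k) * (?Q ^ (k - 1) * (?Q - 1)) / (?Q ^ k - 1)"
  proof -
    have Qk1: "?Q ^ k = ?Q * ?Q ^ (k - 1)" using ik by (cases k) auto
    have "(?Q ^ k - 1) * real g1 = real N * (?Q ^ (k - 1) * (?Q - 1))"
      using E unfolding Qk1 by (simp add: algebra_simps)
    thus ?thesis using Pp top by (simp add: field_simps)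
  qed
  show ?thesis
    unfolding constant_weight_code_def using wv val by auto
qed

end
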